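(* Let $\ell\ge2$ and $A=\{0,1\}^\ell\setminus\{\mathbf{0},\mathbf{1}\}$. If $\mathbf{v}\in(0,1)^\ell$ satisfies $1<\|\mathbf{v}\|_1<\ell-1$, then there exists $d:A\to(0,1)$ with $\sum_{\mathbf{t}\in A}d(\mathbf{t})=1$ such that $\mathbf{v}=\sum_{\mathbf{t}\in A}d(\mathbf{t})\,\mathbf{t}$.
   Context: $\mathbf{0}$ and $\mathbf{1}$ are the all-zeros and all-ones vectors in $\mathbb{R}^\ell$; $\|\cdot\|_1$ is the $L^1$ norm. *)

theory Defs
  imports "HOL-Analysis.Analysis"
begin

definition binvecs_nontriv :: "(real ^ 'n) set" where
  "binvecs_nontriv = {t. \<forall>i. t $ i \<in> {0, 1}} - {0, (\<chi> i. 1)}"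

definition l1norm :: "real ^ 'n \<Rightarrow> real" where
  "l1norm v = (\<Sum>i\<in>UNIV. \<bar>v $ i\<bar>)"

end

theory Submission
  imports Defs
begin

definition PP :: "(real^'n) set" where
 "PP = {x. (\<forall>i. 0 \<le> x$i \<and> x$i \<le> 1) \<and> 1 \<le> (\<Sum>i\<in>UNIV. x$i) \<and> (\<Sum>i\<in>UNIV. x$i) \<le> real CARD('n) - 1}"

definition ev :: "'n \<Rightarrow> real^'n" where "ev i = (\<chi> j. if j = i then 1 else 0)"

lemma sum_ev: "(\<Sum>j\<in>UNIV. ev i $ j) = 1"
  by (simp add: ev_def)

lemma convex_PP: "convex PP"
  unfolding convex_def PP_def
proof (intro ballI allI impI, elim conjE CollectE, intro CollectI conjI allI)
  fix x y :: "real^'n" and u v :: real and i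
  assume x: "\<forall>i. 0 \<le> x$i \<and> x$i \<le> 1" "1 \<le> (\<Sum>i\<in>UNIV. x$i)" "(\<Sum>i\<in>UNIV. x$i) \<le> real CARD('n) - 1"
    and y: "\<forall>i. 0 \<le> y$i \<and> y$i \<le> 1" "1 \<le> (\<Sum>i\<in>UNIV. y$i)" "(\<Sum>i\<in>UNIV. y$i) \<le> real CARD('n) - 1"
    and uv: "0 \<le> u" "0 \<le> v" "u + v = 1"
  have s: "(\<Sum>i\<in>UNIV. (u *\<^sub>R x + v *\<^sub>R y)$i) = u * (\<Sum>i\<in>UNIV. x$i) + v * (\<Sum>i\<in>UNIV. y$i)"
    by (simp add: sum.distrib sum_distrib_left)
  show "0 \<le> (u *\<^sub>R x + v *\<^sub>R y)$i" using x y uv by simp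
  show "(u *\<^sub>R x + v *\<^sub>R y)$i \<le> 1"
  proof -
    have "u * x$i \<le> u" "v * y$i \<le> v" using x y uv by (simp_all add: mult_left_le)
    thus ?thesis using uv by simp
  qed
  show "1 \<le> (\<Sum>i\<in>UNIV. (u *\<^sub>R x + v *\<^sub>R y)$i)"
  proof -
    have "u * 1 \<le> u * (\<Sum>i\<in>UNIV. x$i)" "v * 1 \<le> v * (\<Sum>i\<in>UNIV. y$i)"
      using x y uv by (simp_all add: mult_left_mono del: mult_1_right)
    thus ?thesis using uv s by simp
  qed
  show "(\<Sum>i\<in>UNIV. (u *\<^sub>R x + v *\<^sub>R y)$i) \<le> real CARD('n) - 1"
  proof -
    have "u * (\<Sum>i\<in>UNIV. x$i) \<le> u * (real CARD('n) - 1)" "v * (\<Sum>i\<in>UNIV. y$i) \<le> v * (real CARD('n) - 1)"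
      using x y uv by (simp_all add: mult_left_mono)
    hence "u * (\<Sum>i\<in>UNIV. x$i) + v * (\<Sum>i\<in>UNIV. y$i) \<le> (u+v) * (real CARD('n) - 1)"
      by (simp add: distrib_right)
    thus ?thesis using uv s by simp
  qed
qed

lemma compact_PP: "compact PP"
unfolding compact_eq_bounded_closed proof
  show "bounded PP"
    unfolding bounded_iff
  proof (intro exI ballI)
    fix x :: "real^'n" assume "x \<in> PP"
    hence "(\<Sum>i\<in>UNIV. \<bar>x$i\<bar>) \<le> (\<Sum>i\<in>(UNIV::'n set). 1)"
      unfolding PP_def by (intro sum_mono) auto
    thus "norm x \<le> real CARD('n)" using norm_le_l1_cart[of x] by simp
  qed
  show "closed (PP :: (real^'n) set)"
    unfolding PP_def
    by (intro closed_Collect_conj closed_Collect_all closed_Collect_le continuous_intros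
          continuous_on_sum linear_continuous_on bounded_linear_vec_nth)
qed

lemma PP_perturb:
  fixes x :: "real^'n" and w :: "real^'n" and \<delta> :: real
  assumes "x \<in> PP" "\<delta> > 0"
    and "\<And>i. 0 \<le> x$i + \<delta> * w$i \<and> x$i + \<delta> * w$i \<le> 1"
    and "\<And>i. 0 \<le> x$i - \<delta> * w$i \<and> x$i - \<delta> * w$i \<le> 1"
    and "1 \<le> (\<Sum>i\<in>UNIV. x$i) + \<delta> * (\<Sum>i\<in>UNIV. w$i)" "1 \<le> (\<Sum>i\<in>UNIV. x$i) - \<delta> * (\<Sum>i\<in>UNIV. w$i)"
    and "(\<Sum>i\<in>UNIV. x$i) + \<delta> * (\<Sum>i\<in>UNIV. w$i) \<le> real CARD('n) - 1"
    and "(\<Sum>i\<in>UNIV. x$i) - \<delta> * (\<Sum>i\<in>UNIV. w$i) \<le> real CARD('n) - 1"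
    and "w \<noteq> 0"
  shows "\<not> x extreme_point_of PP"
proof
  assume ex: "x extreme_point_of PP"
  let ?a = "x + \<delta> *\<^sub>R w" and ?b = "x - \<delta> *\<^sub>R w"
  have sa: "(\<Sum>i\<in>UNIV. ?a$i) = (\<Sum>i\<in>UNIV. x$i) + \<delta> * (\<Sum>i\<in>UNIV. w$i)"
    by (simp add: sum.distrib sum_distrib_left)
  have sb: "(\<Sum>i\<in>UNIV. ?b$i) = (\<Sum>i\<in>UNIV. x$i) - \<delta> * (\<Sum>i\<in>UNIV. w$i)"
    by (simp add: sum_subtractf sum_distrib_left)
  have a: "?a \<in> PP" unfolding PP_def using assms(3,5,7) sa by simp
  have b: "?b \<in> PP" unfolding PP_def using assms(4,6,8) sb by simp
  obtain k where "w$k \<noteq> 0" using assms(9) by (metis vec_eq_iff zero_index)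
  hence "?a$k \<noteq> ?b$k" using assms(2) by simp
  hence "?a \<noteq> ?b" by metis
  hence "midpoint ?a ?b \<in> open_segment ?a ?b" by simp
  moreover have "midpoint ?a ?b = x" by (simp add: midpoint_def vec_eq_iff field_simps)
  ultimately show False using ex a b unfolding extreme_point_of_def by metis
qed

lemma extreme_PP:
  fixes x :: "real^'n"
  assumes ex: "x extreme_point_of PP"
  shows "\<forall>i. x$i \<in> {0,1}"
proof (rule ccontr)
  have xP: "x \<in> PP" using ex by (simp add: extreme_point_of_def)
  hence x01: "\<And>i. 0 \<le> x$i \<and> x$i \<le> 1" and s1: "1 \<le> (\<Sum>i\<in>UNIV. x$i)"
     and s2: "(\<Sum>i\<in>UNIV. x$i) \<le> real CARD('n) - 1" unfolding PP_def by auto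
  assume "\<not> (\<forall>i. x$i \<in> {0,1})"
  then obtain i where i: "0 < x$i" "x$i < 1" using x01 by (metis insertCI less_eq_real_def)
  show False
  proof (cases "\<exists>j. j \<noteq> i \<and> 0 < x$j \<and> x$j < 1")
    case True
    then obtain j where j: "j \<noteq> i" "0 < x$j" "x$j < 1" by blast
    define \<delta> where "\<delta> = min (min (x$i) (1 - x$i)) (min (x$j) (1 - x$j))"
    have d: "\<delta> > 0" "\<delta> \<le> x$i" "\<delta> \<le> 1 - x$i" "\<delta> \<le> x$j" "\<delta> \<le> 1 - x$j"
      using i j unfolding \<delta>_def by auto
    define w :: "real^'n" where "w = ev i - ev j"
    have wk: "w$k = (if k = i then 1 else if k = j then -1 else 0)" for k
      using j by (simp add: w_def ev_def)
    have sw: "(\<Sum>k\<in>UNIV. w$k) = 0" by (simp add: w_def sum_subtractf sum_ev)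
    have "w \<noteq> 0" using wk[of i] by auto
    have "\<not> x extreme_point_of PP"
    proof (rule PP_perturb[OF xP d(1) _ _ _ _ _ _ \<open>w \<noteq> 0\<close>])
      fix k
      show "0 \<le> x$k + \<delta> * w$k \<and> x$k + \<delta> * w$k \<le> 1"
           "0 \<le> x$k - \<delta> * w$k \<and> x$k - \<delta> * w$k \<le> 1"
        using wk[of k] d x01[of k] j(1) by (auto split: if_splits)
    qed (use sw s1 s2 in auto)
    thus False using ex by blast
  next
    case False
    have oth: "x$j \<in> \<int>" if "j \<noteq> i" for j
    proof -
      have "x$j = 0 \<or> x$j = 1" using False x01[of j] that by force
      thus ?thesis by auto
    qed
    have ssplit: "(\<Sum>k\<in>UNIV. x$k) = x$i + (\<Sum>k\<in>UNIV-{i}. x$k)"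
      by (simp add: sum.remove)
    have "(\<Sum>k\<in>UNIV-{i}. x$k) \<in> \<int>" using oth by (intro Ints_sum) auto
    then obtain m where m: "(\<Sum>k\<in>UNIV-{i}. x$k) = of_int m" by (metis Ints_cases)
    have "real_of_int m > 0" using s1 ssplit m i by linarith
    hence "m > 0" by simp
    hence "m \<ge> 1" by simp
    hence t1: "1 < (\<Sum>k\<in>UNIV. x$k)" using ssplit m i by simp
    have "x$i + of_int m \<le> real CARD('n) - 1" using s2 ssplit m by simp
    hence "of_int m < real CARD('n) - 1" using i by simp
    hence "m < int CARD('n) - 1" by linarith
    hence "of_int m \<le> real CARD('n) - 2" by linarith
    hence t2: "(\<Sum>k\<in>UNIV. x$k) < real CARD('n) - 1" using ssplit m i by simp
    define \<delta> where "\<delta> = min (min (x$i) (1 - x$i)) (min ((\<Sum>k\<in>UNIV. x$k) - 1) (real CARD('n) - 1 - (\<Sum>k\<in>UNIV. x$k)))"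
    have d: "\<delta> > 0" "\<delta> \<le> x$i" "\<delta> \<le> 1 - x$i" "\<delta> \<le> (\<Sum>k\<in>UNIV. x$k) - 1"
       "\<delta> \<le> real CARD('n) - 1 - (\<Sum>k\<in>UNIV. x$k)"
      using i t1 t2 unfolding \<delta>_def by auto
    define w :: "real^'n" where "w = ev i"
    have wk: "w$k = (if k = i then 1 else 0)" for k
      by (simp add: w_def ev_def)
    have sw: "(\<Sum>k\<in>UNIV. w$k) = 1" by (simp add: w_def sum_ev)
    have "w \<noteq> 0" using wk[of i] by auto
    have "\<not> x extreme_point_of PP"
    proof (rule PP_perturb[OF xP d(1) _ _ _ _ _ _ \<open>w \<noteq> 0\<close>])
      fix k
      show "0 \<le> x$k + \<delta> * w$k \<and> x$k + \<delta> * w$k \<le> 1"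
           "0 \<le> x$k - \<delta> * w$k \<and> x$k - \<delta> * w$k \<le> 1"
        using wk[of k] d x01[of k] by (auto split: if_splits)
    qed (use sw d in auto)
    thus False using ex by blast
  qed
qed


lemma finite_binvecs: "finite (binvecs_nontriv :: (real^'n) set)"
proof -
  have "finite {t :: real^'n. \<forall>i. t$i \<in> {0,1}}"
  proof (rule finite_imageD)
    have "vec_nth ` {t :: real^'n. \<forall>i. t$i \<in> {0,1}} \<subseteq> PiE UNIV (\<lambda>_. {0,1})"
      by auto
    thus "finite (vec_nth ` {t :: real^'n. \<forall>i. t$i \<in> {0,1}})"
      by (rule finite_subset) (intro finite_PiE, auto)
    show "inj_on vec_nth {t :: real^'n. \<forall>i. t$i \<in> {0,1}}"
      by (meson inj_onI vec_nth_inject)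
  qed
  thus ?thesis unfolding binvecs_nontriv_def by (rule finite_subset[rotated]) auto
qed

lemma PP_sub_hull: "(PP :: (real^'n) set) \<subseteq> convex hull binvecs_nontriv"
proof -
  have "{x. x extreme_point_of (PP :: (real^'n) set)} \<subseteq> binvecs_nontriv"
  proof
    fix x :: "real^'n" assume "x \<in> {x. x extreme_point_of PP}"
    hence ex: "x extreme_point_of PP" by simp
    have c: "\<forall>i. x$i \<in> {0,1}" using extreme_PP[OF ex] .
    have xP: "x \<in> PP" using ex by (simp add: extreme_point_of_def)
    hence s1: "1 \<le> (\<Sum>i\<in>UNIV. x$i)" and s2: "(\<Sum>i\<in>UNIV. x$i) \<le> real CARD('n) - 1"
      unfolding PP_def by auto
    have "x \<noteq> 0" using s1 by auto
    moreover have "x \<noteq> (\<chi> i. 1)" using s2 by auto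
    ultimately show "x \<in> binvecs_nontriv" using c unfolding binvecs_nontriv_def by auto
  qed
  hence "convex hull {x. x extreme_point_of (PP :: (real^'n) set)} \<subseteq> convex hull binvecs_nontriv"
    by (rule hull_mono)
  thus ?thesis by (rule order_trans[OF equalityD1[OF Krein_Milman_Minkowski[OF compact_PP convex_PP]]])
qed

theorem lemma14:
  fixes v :: "real ^ 'n"
  assumes "CARD('n) \<ge> 2"
    and "\<forall>i. 0 < v $ i \<and> v $ i < 1"
    and "1 < l1norm v" and "l1norm v < real CARD('n) - 1"
  shows "\<exists>d :: real ^ 'n \<Rightarrow> real.
           (\<forall>t\<in>binvecs_nontriv. 0 < d t \<and> d t < 1) \<and>
           (\<Sum>t\<in>binvecs_nontriv. d t) = 1 \<and>
           v = (\<Sum>t\<in>binvecs_nontriv. d t *\<^sub>R t)"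
proof -
  define A where "A = (binvecs_nontriv :: (real^'n) set)"
  have fA: "finite A" unfolding A_def by (rule finite_binvecs)
  obtain i :: 'n where True by blast
  have "card (UNIV - {i}) \<ge> 1" using assms(1) by (simp add: card_Diff_singleton)
  hence "UNIV - {i} \<noteq> {}" by (metis card.empty not_one_le_zero)
  then obtain j where j: "j \<noteq> i" by blast
  have evA: "ev k \<in> A" if "k' \<noteq> k" for k k'
  proof -
    have "ev k \<noteq> 0" by (simp add: ev_def vec_eq_iff)
    moreover have "ev k \<noteq> (\<chi> i. 1)" using that by (auto simp add: ev_def vec_eq_iff)
    ultimately show ?thesis unfolding A_def binvecs_nontriv_def by (auto simp: ev_def)
  qed
  have eiA: "ev i \<in> A" using evA[of j i] j by simp
  have ejA: "ev j \<in> A" using evA[of i j] j by simp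
  have eij: "ev i \<noteq> ev j" using j by (auto simp: ev_def vec_eq_iff)
  have cardA: "card A > 0" using fA eiA by (auto simp: card_gt_0_iff)
  define c where "c = (\<Sum>t\<in>A. (1 / real (card A)) *\<^sub>R t)"
  define U where "U = {x :: real^'n. (\<forall>i. 0 < x$i \<and> x$i < 1) \<and> 1 < (\<Sum>i\<in>UNIV. x$i) \<and> (\<Sum>i\<in>UNIV. x$i) < real CARD('n) - 1}"
  have Ueq: "U = (\<Inter>i\<in>UNIV. {x :: real^'n. 0 < x$i} \<inter> {x. x$i < 1}) \<inter> {x. 1 < (\<Sum>i\<in>UNIV. x$i)} \<inter> {x. (\<Sum>i\<in>UNIV. x$i) < real CARD('n) - 1}"
    unfolding U_def by auto
  have openU: "open U"
    unfolding Ueq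
    by (intro open_Int open_INT ballI open_Collect_less continuous_intros
          continuous_on_sum linear_continuous_on bounded_linear_vec_nth) auto
  have "l1norm v = (\<Sum>i\<in>UNIV. v$i)" unfolding l1norm_def using assms(2)
    by (intro sum.cong) (auto simp: less_imp_le)
  hence vU: "v \<in> U" unfolding U_def using assms by auto
  have UP: "U \<subseteq> PP" unfolding U_def PP_def by (auto simp: less_imp_le)
  define f where "f e = (1 / (1 - e)) *\<^sub>R (v - e *\<^sub>R c)" for e :: real
  have "(f \<longlongrightarrow> (1 / (1 - 0)) *\<^sub>R (v - 0 *\<^sub>R c)) (at_right 0)"
    unfolding f_def by (intro tendsto_intros) auto
  hence "(f \<longlongrightarrow> v) (at_right 0)" by simp
  hence "eventually (\<lambda>e. f e \<in> U) (at_right 0)"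
    using openU vU by (rule topological_tendstoD)
  then obtain b where b: "b > 0" "\<And>e. e > 0 \<Longrightarrow> e < b \<Longrightarrow> f e \<in> U"
    unfolding eventually_at_right_field by auto
  define e where "e = min b 1 / 2"
  have e: "0 < e" "e < 1" "e < b" using b unfolding e_def by auto
  have "f e \<in> convex hull A" using b(2)[OF e(1) e(3)] UP PP_sub_hull unfolding A_def by blast
  then obtain u where u: "\<forall>x\<in>A. 0 \<le> u x" "sum u A = 1" "(\<Sum>x\<in>A. u x *\<^sub>R x) = f e"
    unfolding convex_hull_finite[OF fA] by blast
  define d where "d t = (1 - e) * u t + e / real (card A)" for t
  have dpos: "0 < d t" if "t \<in> A" for t
    using u(1) that e cardA unfolding d_def by (simp add: add_nonneg_pos)
  have dsum: "sum d A = 1"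
    unfolding d_def using u(2) cardA by (simp add: sum.distrib sum_distrib_left[symmetric])
  have dlt: "d t < 1" if "t \<in> A" for t
  proof -
    obtain t' where t': "t' \<in> A" "t' \<noteq> t" using eiA ejA eij by metis
    have "d t' \<le> sum d (A - {t})"
      using t' fA dpos by (intro member_le_sum) (auto intro: less_imp_le)
    moreover have "sum d A = d t + sum d (A - {t})" using fA that by (simp add: sum.remove)
    ultimately show ?thesis using dsum dpos[OF t'(1)] by linarith
  qed
  have "(\<Sum>t\<in>A. d t *\<^sub>R t) = (1 - e) *\<^sub>R (\<Sum>t\<in>A. u t *\<^sub>R t) + e *\<^sub>R c"
    unfolding d_def c_def by (simp add: scaleR_add_left sum.distrib scaleR_sum_right)
  also have "\<dots> = (1 - e) *\<^sub>R f e + e *\<^sub>R c" using u(3) by simp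
  also have "\<dots> = v" using e unfolding f_def by simp
  finally have "v = (\<Sum>t\<in>A. d t *\<^sub>R t)" by simp
  thus ?thesis using dpos dlt dsum unfolding A_def by blast
qed

end
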